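(* Let $\phi:\mathbb{R}^4\to\mathbb{R}^4$ be an arbitrary map. The following are equivalent: (a) $\phi$ is continuous, satisfies $\langle r_1-r_2,r_1-r_2\rangle=0\Rightarrow\langle\phi(r_1)-\phi(r_2),\phi(r_1)-\phi(r_2)\rangle=0$ for all $r_1,r_2\in\mathbb{R}^4$, and its range is included in a light cone. (b) There exist a countable set $J$, a family $(U_j)_{j\in J}$ of pairwise disjoint open subsets of $\mathbb{R}^4$, a family $(s_j)_{j\in J}$ of vectors of $\mathcal{Q}$, a point $s'\in\mathbb{R}^4$ and a continuous map $f:\mathbb{R}^4\to\mathbb{R}$ such that: (i) for all distinct $j,j'\in J$ and all $r\in U_j$, $r'\in U_{j'}$, one has $\langle r-r',r-r'\rangle\neq0$; (ii) $f$ vanishes everywhere on $\mathbb{R}^4\setminus\bigcup_{j\in J}U_j$; (iii) for all $r\in\mathbb{R}^4$, $\phi(r)=s'+f(r)\,s_j$ if $r\in U_j$ (for some $j\in J$), and $\phi(r)=s'$ otherwise.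
   Context: $\mathbb{R}^4=\{(x,y,z,t)\}$ carries its standard topology and the inner product $\langle (x,y,z,t),(u,v,w,s)\rangle=-xu-yv-zw+ts$. For $r\in\mathbb{R}^4$, the light cone with vertex $r$ is $\{s: \langle s-r,s-r\rangle=0\}$. $\mathcal{Q}=\{(x,y,z,1): x^2+y^2+z^2=1\}$. *)

theory Defs
  imports "HOL-Analysis.Analysis"
begin

text \<open>R^4 = {(x,y,z,t)} modelled as real^4 with coordinates 1,2,3,4 = x,y,z,t.
  Minkowski form <(x,y,z,t),(u,v,w,s)> = -xu - yv - zw + ts.\<close>

definition mink :: "real^4 \<Rightarrow> real^4 \<Rightarrow> real" where
  "mink a b = - a$1 * b$1 - a$2 * b$2 - a$3 * b$3 + a$4 * b$4"

definition light_cone :: "real^4 \<Rightarrow> (real^4) set" where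
  "light_cone r = {s. mink (s - r) (s - r) = 0}"

definition QQ :: "(real^4) set" where
  "QQ = {v. v$4 = 1 \<and> (v$1)^2 + (v$2)^2 + (v$3)^2 = 1}"

end

theory Submission
  imports Defs
begin

lemma mink_scale: "mink (a *\<^sub>R v) (a *\<^sub>R v) = a^2 * mink v v"
  by (simp add: mink_def power2_eq_square algebra_simps)

lemma QQ_null: "v \<in> QQ \<Longrightarrow> mink v v = 0"
  by (simp add: QQ_def mink_def power2_eq_square)

lemma null_t0: assumes "mink v v = 0" "v$4 = 0" shows "v = 0"
proof -
  have "(v$1)^2 + (v$2)^2 + (v$3)^2 = 0" using assms by (simp add: mink_def power2_eq_square)
  hence "v$1 = 0 \<and> v$2 = 0 \<and> v$3 = 0"
    by (smt (verit) zero_le_power2 power_eq_0_iff)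
  thus ?thesis using assms(2) by (simp add: vec_eq_iff forall_4)
qed

lemma normalize_QQ: assumes "mink v v = 0" "v$4 \<noteq> 0"
  shows "(1 / v$4) *\<^sub>R v \<in> QQ"
proof -
  have "(v$1)^2 + (v$2)^2 + (v$3)^2 = (v$4)^2" using assms by (simp add: mink_def power2_eq_square)
  hence "(v$1 / v$4)^2 + (v$2/v$4)^2 + (v$3/v$4)^2 = 1" using assms(2)
    by (simp add: power_divide add_divide_distrib[symmetric])
  thus ?thesis using assms(2) by (simp add: QQ_def)
qed

lemma QQ_eq: assumes "u \<in> QQ" "v \<in> QQ" "a \<noteq> 0" "b \<noteq> 0"
  and "mink (a *\<^sub>R u - b *\<^sub>R v) (a *\<^sub>R u - b *\<^sub>R v) = 0"
  shows "u = v"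
proof -
  have u: "u$4 = 1" "(u$1)^2 + (u$2)^2 + (u$3)^2 = 1" and v: "v$4 = 1" "(v$1)^2 + (v$2)^2 + (v$3)^2 = 1"
    using assms by (auto simp: QQ_def)
  have "mink (a *\<^sub>R u - b *\<^sub>R v) (a *\<^sub>R u - b *\<^sub>R v)
     = 2*a*b*(u$1 * v$1 + u$2 * v$2 + u$3 * v$3 - 1) - a^2*((u$1)^2 + (u$2)^2 + (u$3)^2 - 1)
        - b^2*((v$1)^2 + (v$2)^2 + (v$3)^2 - 1)"
    using u(1) v(1) by (simp add: mink_def power2_eq_square algebra_simps)
  hence "2*a*b*(u$1 * v$1 + u$2 * v$2 + u$3 * v$3 - 1) = 0" using assms(5) u v by simp
  hence d: "u$1 * v$1 + u$2 * v$2 + u$3 * v$3 = 1" using assms(3,4) by simp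
  have "(u$1 - v$1)^2 + (u$2 - v$2)^2 + (u$3 - v$3)^2 = 0"
    using u(2) v(2) d by (simp add: power2_eq_square algebra_simps)
  hence "u$1 = v$1 \<and> u$2 = v$2 \<and> u$3 = v$3"
    by (smt (verit) zero_le_power2 power_eq_0_iff)
  thus ?thesis using u(1) v(1) by (simp add: vec_eq_iff forall_4)
qed

lemma QQ_norm: "v \<in> QQ \<Longrightarrow> norm v \<le> 2"
proof -
  assume "v \<in> QQ"
  hence "norm v ^ 2 = 2" by (simp add: QQ_def power2_norm_eq_inner inner_vec_def sum_4 power2_eq_square[symmetric])
  hence "norm v ^ 2 \<le> 2 ^ 2" by simp
  thus ?thesis by (rule power2_le_imp_le) simp
qed

lemma axis_null: "i \<noteq> 4 \<Longrightarrow> mink (axis i c + axis 4 c) (axis i c + axis 4 c) = 0"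
  "i \<noteq> 4 \<Longrightarrow> mink (axis i c - axis 4 c) (axis i c - axis 4 c) = 0"
  using exhaust_4[of i] by (auto simp: mink_def axis_def)


lemma axis_scale: "axis i (c::real) = c *\<^sub>R axis i 1"
  by (simp add: vec_eq_iff axis_def)

lemma norm_axis_real: "norm (axis i (c::real)) = \<bar>c\<bar>"
  by (subst axis_scale) simp

lemma step_lemma:
  fixes g :: "real^4 \<Rightarrow> 'b"
  assumes H: "\<And>p q. p\<in>S \<Longrightarrow> q\<in>S \<Longrightarrow> mink (p-q) (p-q) = 0 \<Longrightarrow> g p = g q"
    and B: "\<And>x. dist x p \<le> \<bar>l\<bar> \<Longrightarrow> x \<in> S"
  shows "g (p + axis i l) = g p"
proof -
  define j where "j = (if i = 4 then (1::4) else i)"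
  have j4: "j \<noteq> 4" unfolding j_def by simp
  define m where "m = p + axis j (l/2) + axis 4 (l/2)"
  have nm: "norm (axis j (l/2) + axis 4 (l/2)) \<le> \<bar>l\<bar>"
    using norm_triangle_ineq[of "axis j (l/2)" "axis 4 (l/2)"] by (simp add: norm_axis_real)
  have mS: "m \<in> S" using nm by (intro B) (simp add: m_def dist_norm)
  have pS: "p \<in> S" by (intro B) simp
  have qS: "p + axis i l \<in> S" by (intro B) (simp add: dist_norm norm_axis_real)
  have n1: "mink (m - p) (m - p) = 0"
    using j4 exhaust_4[of j] by (auto simp: m_def mink_def axis_def)
  have n2: "mink (p + axis i l - m) (p + axis i l - m) = 0"
    using j4 exhaust_4[of i] unfolding j_def m_def
    by (auto simp: mink_def axis_def power2_eq_square field_simps)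
  have "g m = g p" using H[OF mS pS n1] .
  moreover have "g (p + axis i l) = g m" using H[OF qS mS n2] .
  ultimately show ?thesis by simp
qed

lemma decomp4: "(d::real^4) = axis 1 (d$1) + axis 2 (d$2) + axis 3 (d$3) + axis 4 (d$4)"
  by (simp add: vec_eq_iff forall_4 axis_def)

lemma local_const:
  fixes g :: "real^4 \<Rightarrow> 'b"
  assumes H: "\<And>p q. p\<in>S \<Longrightarrow> q\<in>S \<Longrightarrow> mink (p-q) (p-q) = 0 \<Longrightarrow> g p = g q"
    and B: "ball r e \<subseteq> S" and d: "norm d < e/4"
  shows "g (r + d) = g r"
proof -
  have c: "\<bar>d$k\<bar> \<le> norm d" for k by (rule component_le_norm_cart)
  have S: "x \<in> S" if "dist x r \<le> 4 * norm d" for x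
  proof -
    have "x \<in> ball r e" using that d by (simp add: dist_commute)
    thus ?thesis using B by blast
  qed
  define q1 where "q1 = r + axis 1 (d$1)"
  define q2 where "q2 = q1 + axis 2 (d$2)"
  define q3 where "q3 = q2 + axis 3 (d$3)"
  have dq1: "dist q1 r \<le> norm d" using c[of 1] by (simp add: q1_def dist_norm norm_axis_real)
  have dq2: "dist q2 r \<le> 2*norm d" using c[of 2] dq1 dist_triangle[of q2 r q1]
    by (simp add: q2_def dist_norm norm_axis_real)
  have dq3: "dist q3 r \<le> 3*norm d" using c[of 3] dq2 dist_triangle[of q3 r q2]
    by (simp add: q3_def dist_norm norm_axis_real)
  have e: "g (p + axis k (d$k)) = g p" if "dist p r \<le> 3 * norm d" for p k
  proof (rule step_lemma[OF H])
    fix x assume "dist x p \<le> \<bar>d$k\<bar>"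
    hence "dist x r \<le> 4 * norm d" using that c[of k] dist_triangle[of x r p] by simp
    thus "x \<in> S" by (rule S)
  qed auto
  have "r + d = q3 + axis 4 (d$4)"
    unfolding q3_def q2_def q1_def by (subst decomp4) (simp add: algebra_simps)
  hence "g (r + d) = g q3" using e[OF dq3] by simp
  also have "\<dots> = g q2" unfolding q3_def using e[of q2 3] dq2 norm_ge_zero[of d] by linarith
  also have "\<dots> = g q1" unfolding q2_def using e[of q1 2] dq1 norm_ge_zero[of d] by linarith
  also have "\<dots> = g r" unfolding q1_def using e[of r 1] by simp
  finally show ?thesis .
qed

lemma loc_gen:
  fixes g :: "real^4 \<Rightarrow> 'b"
  assumes H: "\<And>p q. p\<in>S \<Longrightarrow> q\<in>S \<Longrightarrow> mink (p-q) (p-q) = 0 \<Longrightarrow> g p = g q"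
    and S: "open S" and r: "r \<in> S"
  shows "\<exists>e>0. \<forall>y. dist y r < e \<longrightarrow> y \<in> S \<and> g y = g r"
proof -
  obtain e where e: "e > 0" "ball r e \<subseteq> S" using S r open_contains_ball by blast
  have "y \<in> S \<and> g y = g r" if "dist y r < e/4" for y
  proof
    have nrm: "norm (y - r) < e/4" using that by (simp add: dist_norm)
    have "g (r + (y - r)) = g r" using H e(2) nrm by (rule local_const)
    thus "g y = g r" by simp
    have "y \<in> ball r e" using e(1) that by (simp add: dist_commute)
    thus "y \<in> S" using e(2) by blast
  qed
  moreover have "e/4 > 0" using e(1) by simp
  ultimately show ?thesis by blast
qed

lemma forward:
  fixes \<phi> :: "real^4 \<Rightarrow> real^4"
  assumes cont: "continuous_on UNIV \<phi>"
    and P: "\<forall>r1 r2. mink (r1 - r2) (r1 - r2) = 0 \<longrightarrow> mink (\<phi> r1 - \<phi> r2) (\<phi> r1 - \<phi> r2) = 0"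
    and LC: "range \<phi> \<subseteq> light_cone c"
  shows "\<exists>(J :: nat set) (U :: nat \<Rightarrow> (real^4) set) (s :: nat \<Rightarrow> real^4) (s' :: real^4) (f :: real^4 \<Rightarrow> real).
            countable J
          \<and> disjoint_family_on U J
          \<and> (\<forall>j\<in>J. open (U j))
          \<and> (\<forall>j\<in>J. s j \<in> QQ)
          \<and> continuous_on UNIV f
          \<and> (\<forall>j\<in>J. \<forall>j'\<in>J. j \<noteq> j' \<longrightarrow> (\<forall>r\<in>U j. \<forall>r'\<in>U j'. mink (r - r') (r - r') \<noteq> 0))
          \<and> (\<forall>r. r \<notin> (\<Union>j\<in>J. U j) \<longrightarrow> f r = 0)
          \<and> (\<forall>r. (\<forall>j\<in>J. r \<in> U j \<longrightarrow> \<phi> r = s' + f r *\<^sub>R s j)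
                 \<and> (r \<notin> (\<Union>j\<in>J. U j) \<longrightarrow> \<phi> r = s'))"
proof -
  define w where "w r = \<phi> r - c" for r
  have wnull: "mink (w r) (w r) = 0" for r using LC by (auto simp: light_cone_def w_def)
  define f where "f r = (w r)$4" for r
  have fcont: "continuous_on UNIV f" unfolding f_def w_def
    by (intro continuous_intros cont)
  define V where "V = f -` (UNIV - {0})"
  have Vopen: "open V" unfolding V_def by (intro open_vimage fcont) auto
  have inV: "r \<in> V \<longleftrightarrow> f r \<noteq> 0" for r by (simp add: V_def)
  have notV: "\<phi> r = c" if "r \<notin> V" for r
    using null_t0[OF wnull[of r]] that by (simp add: inV f_def w_def)
  define \<sigma> where "\<sigma> r = (1 / f r) *\<^sub>R w r" for r
  have \<sigma>QQ: "\<sigma> r \<in> QQ" if "r \<in> V" for r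
    using normalize_QQ[OF wnull[of r]] that by (simp add: \<sigma>_def inV f_def)
  have wdec: "w r = f r *\<^sub>R \<sigma> r" if "r \<in> V" for r
    using that by (simp add: \<sigma>_def inV)
  have \<phi>dec: "\<phi> r = c + f r *\<^sub>R \<sigma> r" if "r \<in> V" for r
    using wdec[OF that] by (simp add: w_def algebra_simps)
  have H: "\<sigma> p = \<sigma> q" if "p \<in> V" "q \<in> V" "mink (p-q) (p-q) = 0" for p q
  proof -
    have "mink (\<phi> p - \<phi> q) (\<phi> p - \<phi> q) = 0" using P that(3) by blast
    moreover have "\<phi> p - \<phi> q = f p *\<^sub>R \<sigma> p - f q *\<^sub>R \<sigma> q"
      using \<phi>dec[OF that(1)] \<phi>dec[OF that(2)] by simp
    ultimately have m0: "mink (f p *\<^sub>R \<sigma> p - f q *\<^sub>R \<sigma> q) (f p *\<^sub>R \<sigma> p - f q *\<^sub>R \<sigma> q) = 0"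
      by simp
    have nz: "f p \<noteq> 0" "f q \<noteq> 0" using that(1,2) inV by auto
    show ?thesis by (rule QQ_eq[OF \<sigma>QQ[OF that(1)] \<sigma>QQ[OF that(2)] nz m0])
  qed
  have loc: "\<exists>e>0. \<forall>y. dist y r < e \<longrightarrow> y \<in> V \<and> \<sigma> y = \<sigma> r" if "r \<in> V" for r
    using H Vopen that by (rule loc_gen)
  define D where "D = \<sigma> ` V"
  define Uq where "Uq q = {r\<in>V. \<sigma> r = q}" for q
  have Uqopen: "open (Uq q)" for q
    unfolding open_dist
  proof
    fix x assume "x \<in> Uq q"
    hence xV: "x \<in> V" and sx: "\<sigma> x = q" by (simp_all add: Uq_def)
    obtain e where e: "e > 0" "\<forall>y. dist y x < e \<longrightarrow> y \<in> V \<and> \<sigma> y = \<sigma> x"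
      using loc[OF xV] by blast
    have "\<forall>y. dist y x < e \<longrightarrow> y \<in> Uq q"
    proof (intro allI impI)
      fix y assume "dist y x < e"
      hence "y \<in> V" "\<sigma> y = q" using e(2) sx by auto
      thus "y \<in> Uq q" by (simp add: Uq_def)
    qed
    thus "\<exists>e>0. \<forall>y. dist y x < e \<longrightarrow> y \<in> Uq q" using e(1) by blast
  qed
  have "countable (Uq ` D)"
  proof (rule countable_disjoint_open_subsets)
    show "\<And>S. S \<in> Uq ` D \<Longrightarrow> open S" using Uqopen by blast
    show "pairwise disjnt (Uq ` D)" by (auto simp: pairwise_def disjnt_def Uq_def)
  qed
  moreover have "inj_on Uq D"
  proof
    fix q q' assume "q \<in> D" "q' \<in> D" "Uq q = Uq q'"
    then obtain r where "r \<in> V" "\<sigma> r = q" by (auto simp: D_def)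
    hence "r \<in> Uq q'" using \<open>Uq q = Uq q'\<close> by (auto simp: Uq_def)
    thus "q = q'" using \<open>\<sigma> r = q\<close> by (simp add: Uq_def)
  qed
  ultimately have cD: "countable D" by (rule countable_image_inj_on)
  define J where "J = to_nat_on D ` D"
  define s where "s j = from_nat_into D j" for j
  define U where "U j = Uq (s j)" for j
  have sD: "s j \<in> D" if "j \<in> J" for j
    using that by (auto simp: s_def J_def intro!: from_nat_into)
  have sinj: "j = j'" if "j \<in> J" "j' \<in> J" "s j = s j'" for j j'
    using that to_nat_on_from_nat_into by (metis J_def s_def)
  have UnV: "(\<Union>j\<in>J. U j) = V"
  proof
    show "(\<Union>j\<in>J. U j) \<subseteq> V" by (auto simp: U_def Uq_def)
    show "V \<subseteq> (\<Union>j\<in>J. U j)"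
    proof
      fix r assume r: "r \<in> V"
      hence "\<sigma> r \<in> D" by (simp add: D_def)
      hence "to_nat_on D (\<sigma> r) \<in> J" "s (to_nat_on D (\<sigma> r)) = \<sigma> r"
        using cD by (auto simp: J_def s_def)
      thus "r \<in> (\<Union>j\<in>J. U j)" using r unfolding U_def Uq_def by (metis (mono_tags, lifting) UN_iff mem_Collect_eq)
    qed
  qed
  show ?thesis
  proof (intro exI[of _ J] exI[of _ U] exI[of _ s] exI[of _ c] exI[of _ f] conjI)
    show "countable J" using cD by (simp add: J_def)
    show "disjoint_family_on U J"
      unfolding disjoint_family_on_def using sinj by (auto simp: U_def Uq_def)
    show "\<forall>j\<in>J. open (U j)" by (simp add: U_def Uqopen)
    show "\<forall>j\<in>J. s j \<in> QQ" using sD \<sigma>QQ unfolding D_def by (metis imageE)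
    show "continuous_on UNIV f" by (rule fcont)
    show "\<forall>j\<in>J. \<forall>j'\<in>J. j \<noteq> j' \<longrightarrow> (\<forall>r\<in>U j. \<forall>r'\<in>U j'. mink (r - r') (r - r') \<noteq> 0)"
    proof (intro ballI impI)
      fix j j' r r' assume jj: "j \<in> J" "j' \<in> J" "j \<noteq> j'" and rr: "r \<in> U j" "r' \<in> U j'"
      show "mink (r - r') (r - r') \<noteq> 0"
      proof
        assume m: "mink (r - r') (r - r') = 0"
        have "r \<in> V" "r' \<in> V" "\<sigma> r = s j" "\<sigma> r' = s j'" using rr by (simp_all add: U_def Uq_def)
        hence "s j = s j'" using H[OF _ _ m] by simp
        thus False using sinj jj by blast
      qed
    qed
    show "\<forall>r. r \<notin> (\<Union>j\<in>J. U j) \<longrightarrow> f r = 0" using UnV inV by auto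
    show "\<forall>r. (\<forall>j\<in>J. r \<in> U j \<longrightarrow> \<phi> r = c + f r *\<^sub>R s j) \<and> (r \<notin> (\<Union>j\<in>J. U j) \<longrightarrow> \<phi> r = c)"
      using UnV notV \<phi>dec by (auto simp: U_def Uq_def)
  qed
qed


lemma backward:
  fixes \<phi> :: "real^4 \<Rightarrow> real^4" and J :: "nat set" and U :: "nat \<Rightarrow> (real^4) set"
    and s :: "nat \<Rightarrow> real^4" and s' :: "real^4" and f :: "real^4 \<Rightarrow> real"
  assumes dj: "disjoint_family_on U J"
    and op: "\<forall>j\<in>J. open (U j)"
    and sQ: "\<forall>j\<in>J. s j \<in> QQ"
    and fc: "continuous_on UNIV f"
    and sep: "\<forall>j\<in>J. \<forall>j'\<in>J. j \<noteq> j' \<longrightarrow> (\<forall>r\<in>U j. \<forall>r'\<in>U j'. mink (r - r') (r - r') \<noteq> 0)"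
    and f0: "\<forall>r. r \<notin> (\<Union>j\<in>J. U j) \<longrightarrow> f r = 0"
    and form: "\<forall>r. (\<forall>j\<in>J. r \<in> U j \<longrightarrow> \<phi> r = s' + f r *\<^sub>R s j)
                 \<and> (r \<notin> (\<Union>j\<in>J. U j) \<longrightarrow> \<phi> r = s')"
  shows "continuous_on UNIV \<phi>
          \<and> (\<forall>r1 r2. mink (r1 - r2) (r1 - r2) = 0 \<longrightarrow> mink (\<phi> r1 - \<phi> r2) (\<phi> r1 - \<phi> r2) = 0)
          \<and> (\<exists>r. range \<phi> \<subseteq> light_cone r)"
proof -
  define W where "W = (\<Union>j\<in>J. U j)"
  have inU: "\<phi> r = s' + f r *\<^sub>R s j" if "j \<in> J" "r \<in> U j" for r j using form that by blast
  have outW: "\<phi> r = s'" "f r = 0" if "r \<notin> W" for r using form f0 that unfolding W_def by blast+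
  have vec: "\<exists>v. \<phi> r - s' = f r *\<^sub>R v \<and> mink v v = 0 \<and> norm v \<le> 2" for r
  proof (cases "r \<in> W")
    case True
    then obtain j where j: "j \<in> J" "r \<in> U j" unfolding W_def by blast
    show ?thesis using inU[OF j] sQ j(1) QQ_null QQ_norm by (intro exI[of _ "s j"]) auto
  next
    case False
    show ?thesis using outW[OF False] by (intro exI[of _ 0]) (simp add: mink_def)
  qed
  have cone: "range \<phi> \<subseteq> light_cone s'"
  proof
    fix x assume "x \<in> range \<phi>"
    then obtain r where r: "x = \<phi> r" by blast
    obtain v where "\<phi> r - s' = f r *\<^sub>R v" "mink v v = 0" using vec by blast
    thus "x \<in> light_cone s'" using r by (simp add: light_cone_def mink_scale)
  qed
  have light: "mink (\<phi> r1 - \<phi> r2) (\<phi> r1 - \<phi> r2) = 0" if m: "mink (r1 - r2) (r1 - r2) = 0" for r1 r2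
  proof -
    have "\<exists>v c. \<phi> r1 - \<phi> r2 = c *\<^sub>R v \<and> mink v v = 0"
    proof (cases "r1 \<in> W")
      case True
      then obtain j where j: "j \<in> J" "r1 \<in> U j" unfolding W_def by blast
      show ?thesis
      proof (cases "r2 \<in> W")
        case True
        then obtain j' where j': "j' \<in> J" "r2 \<in> U j'" unfolding W_def by blast
        have "j = j'" using sep j j' m by blast
        hence "\<phi> r1 - \<phi> r2 = (f r1 - f r2) *\<^sub>R s j" using inU[OF j] inU[OF j'] by (simp add: algebra_simps)
        thus ?thesis using QQ_null sQ j(1) by blast
      next
        case False
        have "\<phi> r1 - \<phi> r2 = f r1 *\<^sub>R s j" using inU[OF j] outW[OF False] by simp
        thus ?thesis using QQ_null sQ j(1) by blast
      qed
    next
      case False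
      obtain v where v: "\<phi> r2 - s' = f r2 *\<^sub>R v" "mink v v = 0" using vec by blast
      have "\<phi> r1 - \<phi> r2 = (- f r2) *\<^sub>R v" using v(1) outW[OF False] by (simp add: algebra_simps)
      thus ?thesis using v(2) by blast
    qed
    then obtain v c where "\<phi> r1 - \<phi> r2 = c *\<^sub>R v" "mink v v = 0" by blast
    thus ?thesis by (simp add: mink_scale)
  qed
  have bound: "\<exists>d>0. \<forall>y. dist y x < d \<longrightarrow> dist (\<phi> y) (\<phi> x) \<le> 2 * dist (f y) (f x)" for x
  proof (cases "x \<in> W")
    case True
    then obtain j where j: "j \<in> J" "x \<in> U j" unfolding W_def by blast
    obtain d where d: "d > 0" "ball x d \<subseteq> U j" using op j open_contains_ball by blast
    have "dist (\<phi> y) (\<phi> x) \<le> 2 * dist (f y) (f x)" if "dist y x < d" for y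
    proof -
      have "y \<in> U j" using d that by (auto simp: dist_commute)
      hence "\<phi> y - \<phi> x = (f y - f x) *\<^sub>R s j" using inU[OF j(1)] j(2) by (simp add: algebra_simps)
      hence "dist (\<phi> y) (\<phi> x) = \<bar>f y - f x\<bar> * norm (s j)" by (simp add: dist_norm)
      also have "\<dots> \<le> \<bar>f y - f x\<bar> * 2" using QQ_norm sQ j(1) by (intro mult_left_mono) auto
      finally show ?thesis by (simp add: dist_real_def)
    qed
    thus ?thesis using d(1) by blast
  next
    case False
    have "dist (\<phi> y) (\<phi> x) \<le> 2 * dist (f y) (f x)" for y
    proof -
      obtain v where v: "\<phi> y - s' = f y *\<^sub>R v" "norm v \<le> 2" using vec by blast
      have "dist (\<phi> y) (\<phi> x) = \<bar>f y\<bar> * norm v" using v(1) outW[OF False] by (simp add: dist_norm)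
      also have "\<dots> \<le> \<bar>f y\<bar> * 2" using v(2) by (intro mult_left_mono) auto
      finally show ?thesis using outW[OF False] by (simp add: dist_real_def)
    qed
    thus ?thesis by (intro exI[of _ 1]) auto
  qed
  have cont: "continuous_on UNIV \<phi>"
    unfolding continuous_on_iff
  proof (intro ballI allI impI)
    fix x and e :: real assume e: "e > 0"
    obtain d1 where d1: "d1 > 0" "\<forall>y. dist y x < d1 \<longrightarrow> dist (\<phi> y) (\<phi> x) \<le> 2 * dist (f y) (f x)"
      using bound by blast
    obtain d2 where d2: "d2 > 0" "\<forall>y\<in>UNIV. dist y x < d2 \<longrightarrow> dist (f y) (f x) < e/2"
      using fc e unfolding continuous_on_iff by (meson UNIV_I half_gt_zero)
    have "\<forall>y\<in>UNIV. dist y x < min d1 d2 \<longrightarrow> dist (\<phi> y) (\<phi> x) < e"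
    proof (intro ballI impI)
      fix y assume "dist y x < min d1 d2"
      hence "dist (\<phi> y) (\<phi> x) \<le> 2 * dist (f y) (f x)" "dist (f y) (f x) < e/2" using d1 d2 by auto
      thus "dist (\<phi> y) (\<phi> x) < e" by linarith
    qed
    thus "\<exists>d>0. \<forall>y\<in>UNIV. dist y x < d \<longrightarrow> dist (\<phi> y) (\<phi> x) < e" using d1(1) d2(1)
      by (intro exI[of _ "min d1 d2"]) auto
  qed
  show ?thesis using cont light cone by blast
qed

theorem proposition3p1:
  fixes \<phi> :: "real^4 \<Rightarrow> real^4"
  shows "(continuous_on UNIV \<phi>
          \<and> (\<forall>r1 r2. mink (r1 - r2) (r1 - r2) = 0 \<longrightarrow> mink (\<phi> r1 - \<phi> r2) (\<phi> r1 - \<phi> r2) = 0)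
          \<and> (\<exists>r. range \<phi> \<subseteq> light_cone r))
     \<longleftrightarrow>
         (\<exists>(J :: nat set) (U :: nat \<Rightarrow> (real^4) set) (s :: nat \<Rightarrow> real^4) (s' :: real^4) (f :: real^4 \<Rightarrow> real).
            countable J
          \<and> disjoint_family_on U J
          \<and> (\<forall>j\<in>J. open (U j))
          \<and> (\<forall>j\<in>J. s j \<in> QQ)
          \<and> continuous_on UNIV f
          \<and> (\<forall>j\<in>J. \<forall>j'\<in>J. j \<noteq> j' \<longrightarrow> (\<forall>r\<in>U j. \<forall>r'\<in>U j'. mink (r - r') (r - r') \<noteq> 0))
          \<and> (\<forall>r. r \<notin> (\<Union>j\<in>J. U j) \<longrightarrow> f r = 0)
          \<and> (\<forall>r. (\<forall>j\<in>J. r \<in> U j \<longrightarrow> \<phi> r = s' + f r *\<^sub>R s j)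
                 \<and> (r \<notin> (\<Union>j\<in>J. U j) \<longrightarrow> \<phi> r = s')))" (is "?L \<longleftrightarrow> ?R")
proof
  assume "?L"
  thus "?R"
    apply (elim conjE exE)
    apply (rule forward)
      apply assumption+
    done
next
  assume "?R"
  thus "?L"
    apply (elim conjE exE)
    apply (rule backward)
          apply assumption+
    done
qed

end
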